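(* Let $b>0$ and $\varepsilon\in\mathbb{R}$. If $u(t,x)$ solves $u_t=xu_{xx}+bu_x$, then $$\tilde u_\varepsilon(t,x)=(1+\varepsilon t)^{-b}\exp\!\left(\frac{-\varepsilon x}{1+\varepsilon t}\right)u\!\left(\frac{t}{1+\varepsilon t},\ \frac{x}{(1+\varepsilon t)^2}\right)$$ is also a solution wherever $1+\varepsilon t>0$ and the argument lies in the domain of $u$. In particular, for constants $c_0,c_1$, $$u_\varepsilon(t,x)=(1+\varepsilon t)^{-b}\exp\!\left(\frac{-\varepsilon x}{1+\varepsilon t}\right)\left[c_0+c_1(1+\varepsilon t)^{2(b-1)}x^{1-b}\right]\ (b\neq1),$$ $$u_\varepsilon(t,x)=(1+\varepsilon t)^{-1}\exp\!\left(\frac{-\varepsilon x}{1+\varepsilon t}\right)\left[c_0+c_1\log\frac{\sqrt x}{1+\varepsilon t}\right]\ (b=1),$$ are solutions for $x>0$, $1+\varepsilon t>0$. *)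

theory Defs
  imports "HOL-Analysis.Analysis"
begin

definition solves_pde :: "real \<Rightarrow> (real \<times> real) set \<Rightarrow> (real \<Rightarrow> real \<Rightarrow> real) \<Rightarrow> bool" where
  "solves_pde b D u \<longleftrightarrow>
     (\<exists>ut ux uxx :: real \<Rightarrow> real \<Rightarrow> real. \<forall>t x. (t, x) \<in> D \<longrightarrow>
        ((\<lambda>p. u (fst p) (snd p)) has_derivative (\<lambda>h. ut t x * fst h + ux t x * snd h)) (at (t, x))
      \<and> ((\<lambda>y. ux t y) has_real_derivative uxx t x) (at x)
      \<and> ut t x = x * uxx t x + b * ux t x)"

end

theory Submission
  imports Defs
begin

lemma g_deriv:
  fixes e t x :: real assumes s: "1 + e*t > 0"
  shows "((\<lambda>p. (fst p/(1+e*fst p), snd p/(1+e*fst p)^2)) has_derivative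
     (\<lambda>h. (fst h/(1+e*t)^2, snd h/(1+e*t)^2 - 2*e*x/(1+e*t)^3 * fst h))) (at (t,x))"
proof -
  define s where "s = 1+e*t"
  have sp: "s > 0" "s \<noteq> 0" using s s_def by auto
  show ?thesis
  apply (rule has_derivative_eq_rhs)
   apply (rule derivative_eq_intros refl | (insert s, simp; fail))+
  apply (simp add: fun_eq_iff s_def[symmetric])
  using sp apply (intro allI conjI; simp add: field_simps power2_eq_square power3_eq_cube eval_nat_numeral)
  apply (simp add: s_def algebra_simps)
  done
qed

lemma A_deriv:
  fixes e t x b :: real assumes s: "1 + e*t > 0"
  shows "((\<lambda>p. (1+e*fst p) powr (-b)) has_derivative
     (\<lambda>h. -b*e*(1+e*t) powr (-b)/(1+e*t) * fst h)) (at (t,x))"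
  apply (rule derivative_eq_intros refl)+
  using s apply auto
  done

lemma E_deriv:
  fixes e t x :: real assumes s: "1 + e*t > 0"
  shows "((\<lambda>p. exp (- e * snd p / (1 + e * fst p))) has_derivative
     (\<lambda>h. exp (- e * x / (1 + e * t)) * (e^2*x/(1+e*t)^2 * fst h - e/(1+e*t) * snd h))) (at (t,x))"
proof -
  define s where "s = 1+e*t"
  have sp: "s > 0" "s \<noteq> 0" using s s_def by auto
  show ?thesis
  apply (rule has_derivative_eq_rhs)
   apply (rule derivative_eq_intros refl | (insert s, simp; fail))+
  apply (simp add: fun_eq_iff s_def[symmetric])
  using sp apply (intro allI conjI; simp add: field_simps power2_eq_square power3_eq_cube eval_nat_numeral)
  done
qed

lemma aux_deriv:
  fixes e s P x d1 d2 :: real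
  assumes "(f1 has_real_derivative d1) (at x)" "(f2 has_real_derivative d2) (at x)" "s \<noteq> 0"
  shows "((\<lambda>y. P * exp(-e*y/s) * (-e/s * f1 y + f2 y/s^2)) has_real_derivative
     P*exp(-e*x/s)*((-e/s)*((-e/s)*f1 x + f2 x/s^2) + (-e/s*d1 + d2/s^2))) (at x)"
  apply (rule DERIV_cong)
   apply (rule derivative_eq_intros assms refl | (insert assms, simp; fail))+
  using assms(3) apply (simp add: field_simps)
  done

lemma part1:
  fixes b \<epsilon> :: real
  assumes sol: "solves_pde b D u"
  shows "solves_pde b {(t, x). 1 + \<epsilon> * t > 0 \<and> (t / (1 + \<epsilon> * t), x / (1 + \<epsilon> * t)\<^sup>2) \<in> D}
              (\<lambda>t x. (1 + \<epsilon> * t) powr (- b) * exp (- \<epsilon> * x / (1 + \<epsilon> * t))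
                       * u (t / (1 + \<epsilon> * t)) (x / (1 + \<epsilon> * t)\<^sup>2))"
proof -
  obtain ut ux uxx where H: "\<And>t x. (t, x) \<in> D \<Longrightarrow>
        ((\<lambda>p. u (fst p) (snd p)) has_derivative (\<lambda>h. ut t x * fst h + ux t x * snd h)) (at (t, x))
      \<and> ((\<lambda>y. ux t y) has_real_derivative uxx t x) (at x)
      \<and> ut t x = x * uxx t x + b * ux t x"
    using sol unfolding solves_pde_def by blast
  define ut' where "ut' = (\<lambda>t x. (1 + \<epsilon> * t) powr (- b) * exp (- \<epsilon> * x / (1 + \<epsilon> * t)) *
     (-b*\<epsilon>/(1 + \<epsilon> * t) * u (t / (1 + \<epsilon> * t)) (x / (1 + \<epsilon> * t)\<^sup>2)
      + \<epsilon>^2*x/(1 + \<epsilon> * t)^2 * u (t / (1 + \<epsilon> * t)) (x / (1 + \<epsilon> * t)\<^sup>2)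
      + ut (t / (1 + \<epsilon> * t)) (x / (1 + \<epsilon> * t)\<^sup>2) / (1 + \<epsilon> * t)^2
      - 2*\<epsilon>*x/(1 + \<epsilon> * t)^3 * ux (t / (1 + \<epsilon> * t)) (x / (1 + \<epsilon> * t)\<^sup>2)))"
  define ux' where "ux' = (\<lambda>t x. (1 + \<epsilon> * t) powr (- b) * exp (- \<epsilon> * x / (1 + \<epsilon> * t)) *
     (-\<epsilon>/(1 + \<epsilon> * t) * u (t / (1 + \<epsilon> * t)) (x / (1 + \<epsilon> * t)\<^sup>2)
      + ux (t / (1 + \<epsilon> * t)) (x / (1 + \<epsilon> * t)\<^sup>2) / (1 + \<epsilon> * t)^2))"
  define uxx' where "uxx' = (\<lambda>t x. (1 + \<epsilon> * t) powr (- b) * exp (- \<epsilon> * x / (1 + \<epsilon> * t)) *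
     (\<epsilon>^2/(1 + \<epsilon> * t)^2 * u (t / (1 + \<epsilon> * t)) (x / (1 + \<epsilon> * t)\<^sup>2)
      - 2*\<epsilon>/(1 + \<epsilon> * t)^3 * ux (t / (1 + \<epsilon> * t)) (x / (1 + \<epsilon> * t)\<^sup>2)
      + uxx (t / (1 + \<epsilon> * t)) (x / (1 + \<epsilon> * t)\<^sup>2) / (1 + \<epsilon> * t)^4))"
  show ?thesis
    unfolding solves_pde_def
  proof (rule exI[of _ ut'], rule exI[of _ ux'], rule exI[of _ uxx'], intro allI impI conjI)
    fix t x assume tx: "(t, x) \<in> {(t, x). 1 + \<epsilon> * t > 0 \<and> (t / (1 + \<epsilon> * t), x / (1 + \<epsilon> * t)\<^sup>2) \<in> D}"
    then have s: "1 + \<epsilon> * t > 0" and inD: "(t / (1 + \<epsilon> * t), x / (1 + \<epsilon> * t)\<^sup>2) \<in> D" by auto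
    define s where "s = 1 + \<epsilon> * t"
    have sp: "s > 0" "s \<noteq> 0" using s s_def by auto
    define \<tau> where "\<tau> = t / s"
    define \<xi> where "\<xi> = x / s^2"
    have Hd: "((\<lambda>p. u (fst p) (snd p)) has_derivative (\<lambda>h. ut \<tau> \<xi> * fst h + ux \<tau> \<xi> * snd h)) (at (\<tau>, \<xi>))"
      and Hxx: "((\<lambda>y. ux \<tau> y) has_real_derivative uxx \<tau> \<xi>) (at \<xi>)"
      and Hpde: "ut \<tau> \<xi> = \<xi> * uxx \<tau> \<xi> + b * ux \<tau> \<xi>"
      using H[OF inD] unfolding \<tau>_def \<xi>_def s_def by blast+
    have gtx: "(\<lambda>p. (fst p/(1+\<epsilon>*fst p), snd p/(1+\<epsilon>*fst p)^2)) (t,x) = (\<tau>, \<xi>)"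
      by (simp add: \<tau>_def \<xi>_def s_def)
    have Ud: "((\<lambda>p. u (fst p) (snd p)) has_derivative (\<lambda>h. ut \<tau> \<xi> * fst h + ux \<tau> \<xi> * snd h))
       (at ((\<lambda>p. (fst p/(1+\<epsilon>*fst p), snd p/(1+\<epsilon>*fst p)^2)) (t,x)))"
      unfolding gtx by (rule Hd)
    have C: "((\<lambda>p. u (fst p/(1+\<epsilon>*fst p)) (snd p/(1+\<epsilon>*fst p)^2)) has_derivative
         (\<lambda>h. ut \<tau> \<xi> * (fst h/s^2) + ux \<tau> \<xi> * (snd h/s^2 - 2*\<epsilon>*x/s^3 * fst h))) (at (t,x))"
      using has_derivative_compose[OF g_deriv[OF s, of x] Ud] by (simp add: s_def)
    have AE: "((\<lambda>p. (1+\<epsilon>*fst p) powr (-b) * exp (- \<epsilon> * snd p / (1 + \<epsilon> * fst p))) has_derivative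
       (\<lambda>h. s powr (-b) * (exp (- \<epsilon> * x / s) * (\<epsilon>^2*x/s^2 * fst h - \<epsilon>/s * snd h))
          + -b*\<epsilon>* s powr (-b)/s * fst h * exp (- \<epsilon> * x / s))) (at (t,x))"
      using has_derivative_mult[OF A_deriv[OF s, where x=x and b=b] E_deriv[OF s, of x]] by (simp add: s_def)
    have W: "((\<lambda>p. (1+\<epsilon>*fst p) powr (-b) * exp (- \<epsilon> * snd p / (1 + \<epsilon> * fst p)) *
        u (fst p/(1+\<epsilon>*fst p)) (snd p/(1+\<epsilon>*fst p)^2)) has_derivative
       (\<lambda>h. s powr (-b) * exp (- \<epsilon> * x / s) * (ut \<tau> \<xi> * (fst h/s^2) + ux \<tau> \<xi> * (snd h/s^2 - 2*\<epsilon>*x/s^3 * fst h))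
          + (s powr (-b) * (exp (- \<epsilon> * x / s) * (\<epsilon>^2*x/s^2 * fst h - \<epsilon>/s * snd h))
          + -b*\<epsilon>* s powr (-b)/s * fst h * exp (- \<epsilon> * x / s)) * u \<tau> \<xi>)) (at (t,x))"
      using has_derivative_mult[OF AE C] by (simp add: s_def \<tau>_def \<xi>_def)
    show "((\<lambda>p. (1 + \<epsilon> * fst p) powr (- b) * exp (- \<epsilon> * snd p / (1 + \<epsilon> * fst p)) *
            u (fst p / (1 + \<epsilon> * fst p)) (snd p / (1 + \<epsilon> * fst p)\<^sup>2)) has_derivative
          (\<lambda>h. ut' t x * fst h + ux' t x * snd h)) (at (t, x))"
      apply (rule has_derivative_eq_rhs[OF W])
      apply (simp only: fun_eq_iff ut'_def ux'_def s_def[symmetric] \<tau>_def[symmetric] \<xi>_def[symmetric])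
      using sp apply (simp add: field_simps power2_eq_square power3_eq_cube eval_nat_numeral)
      done
    show "((\<lambda>y. ux' t y) has_real_derivative uxx' t x) (at x)"
    proof -
      have l: "((\<lambda>y. (\<tau>, y/s^2)) has_derivative (\<lambda>h. (0, h/s^2))) (at x)"
        by (rule has_derivative_eq_rhs, (rule derivative_eq_intros refl | (insert sp, simp; fail))+, insert sp, simp add: fun_eq_iff field_simps power2_eq_square)
      have lx: "(\<lambda>y. (\<tau>, y/s^2)) x = (\<tau>, \<xi>)" by (simp add: \<xi>_def)
      have Hd': "((\<lambda>p. u (fst p) (snd p)) has_derivative (\<lambda>h. ut \<tau> \<xi> * fst h + ux \<tau> \<xi> * snd h)) (at ((\<lambda>y. (\<tau>, y/s^2)) x))"
        unfolding lx by (rule Hd)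
      have u1: "((\<lambda>y. u \<tau> (y/s^2)) has_real_derivative ux \<tau> \<xi> / s^2) (at x)"
        unfolding has_field_derivative_def
        by (rule has_derivative_eq_rhs[OF has_derivative_compose[OF l Hd', simplified]]) (simp add: fun_eq_iff)
      have d: "((\<lambda>y. y/s^2) has_real_derivative 1/s^2) (at x)"
        by (rule DERIV_cong, (rule derivative_eq_intros refl | (insert sp, simp; fail))+, insert sp, simp add: field_simps power2_eq_square)
      have u2: "((\<lambda>y. ux \<tau> (y/s^2)) has_real_derivative uxx \<tau> \<xi> / s^2) (at x)"
        using DERIV_chain2[of "ux \<tau>", OF _ d] Hxx unfolding \<xi>_def by simp
      have fe: "(\<lambda>y. ux' t y) = (\<lambda>y. s powr (-b) * exp(-\<epsilon>*y/s) * (-\<epsilon>/s * u \<tau> (y/s^2) + ux \<tau> (y/s^2)/s^2))"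
        by (simp add: ux'_def s_def \<tau>_def)
      show ?thesis
        unfolding fe
        apply (rule DERIV_cong[OF aux_deriv[OF u1 u2 sp(2)]])
        apply (simp only: uxx'_def s_def[symmetric] \<tau>_def[symmetric] \<xi>_def[symmetric])
        using sp apply (simp add: field_simps power2_eq_square power3_eq_cube eval_nat_numeral)
        done
    qed
    show "ut' t x = x * uxx' t x + b * ux' t x"
      apply (simp only: ut'_def ux'_def uxx'_def s_def[symmetric] \<tau>_def[symmetric] \<xi>_def[symmetric] Hpde)
      using sp apply (simp add: \<xi>_def field_simps power2_eq_square power3_eq_cube eval_nat_numeral)
      done
  qed
qed

lemma transfer:
  assumes "solves_pde b D u" "open D" "\<And>t x. (t,x) \<in> D \<Longrightarrow> u t x = v t x"
  shows "solves_pde b D v"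
proof -
  obtain ut ux uxx where H: "\<And>t x. (t, x) \<in> D \<Longrightarrow>
        ((\<lambda>p. u (fst p) (snd p)) has_derivative (\<lambda>h. ut t x * fst h + ux t x * snd h)) (at (t, x))
      \<and> ((\<lambda>y. ux t y) has_real_derivative uxx t x) (at x)
      \<and> ut t x = x * uxx t x + b * ux t x"
    using assms(1) unfolding solves_pde_def by blast
  show ?thesis unfolding solves_pde_def
  proof (rule exI[of _ ut], rule exI[of _ ux], rule exI[of _ uxx], intro allI impI conjI)
    fix t x assume tx: "(t,x) \<in> D"
    have "((\<lambda>p. u (fst p) (snd p)) has_derivative (\<lambda>h. ut t x * fst h + ux t x * snd h)) (at (t, x))"
      using H[OF tx] by blast
    then show "((\<lambda>p. v (fst p) (snd p)) has_derivative (\<lambda>h. ut t x * fst h + ux t x * snd h)) (at (t, x))"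
      by (rule has_derivative_transform_within_open[OF _ assms(2) tx])
         (metis assms(3) prod.collapse)
    show "((\<lambda>y. ux t y) has_real_derivative uxx t x) (at x)" using H[OF tx] by blast
    show "ut t x = x * uxx t x + b * ux t x" using H[OF tx] by blast
  qed
qed
lemma openD0: "open {(t::real, x::real). x > 0}"
proof -
  have e: "{(t::real, x::real). x > 0} = {p. 0 < snd p}" by auto
  show ?thesis unfolding e
    by (rule open_Collect_less) (auto intro!: continuous_intros)
qed

lemma openD1: "open {(t::real, x::real). x > 0 \<and> 1 + e * t > 0}"
proof -
  have "{(t::real, x::real). x > 0 \<and> 1 + e * t > 0} = {p. 0 < snd p} \<inter> {p. 0 < 1 + e * fst p}" by auto
  moreover have "open {p::real\<times>real. 0 < snd p}"
    by (rule open_Collect_less) (auto intro!: continuous_intros)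
  moreover have "open {p::real\<times>real. 0 < 1 + e * fst p}"
    by (rule open_Collect_less) (auto intro!: continuous_intros)
  ultimately show ?thesis by (simp add: open_Int)
qed
lemma sol_pow:
  fixes b c0 c1 :: real
  shows "solves_pde b {(t, x). x > 0} (\<lambda>t x. c0 + c1 * x powr (1 - b))"
  unfolding solves_pde_def
proof (rule exI[of _ "\<lambda>t x. 0"], rule exI[of _ "\<lambda>t x. c1 * (1-b) * x powr (1-b) / x"],
       rule exI[of _ "\<lambda>t x. c1 * (1-b) * (-b) * x powr (1-b) / x^2"], intro allI impI conjI)
  fix t x :: real assume "(t,x) \<in> {(t, x). x > 0}"
  then have x: "x > 0" by auto
  have xp: "x powr (1-b) = x * x powr (-b)"
    using x by (simp add: powr_diff powr_minus divide_inverse)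
  show "((\<lambda>p. c0 + c1 * snd p powr (1 - b)) has_derivative (\<lambda>h. 0 * fst h + c1 * (1-b) * x powr (1-b) / x * snd h)) (at (t, x))"
    apply (rule has_derivative_eq_rhs)
     apply (rule derivative_eq_intros refl | (insert x, simp; fail))+
    using x apply (simp add: fun_eq_iff field_simps)
    done
  show "((\<lambda>y. c1 * (1-b) * y powr (1-b) / y) has_real_derivative c1 * (1-b) * (-b) * x powr (1-b) / x^2) (at x)"
    apply (rule DERIV_cong)
     apply (rule derivative_eq_intros refl | (insert x, simp; fail))+
    using x apply (simp add: field_simps power2_eq_square xp)
    done
  show "0 = x * (c1 * (1 - b) * - b * x powr (1 - b) / x\<^sup>2) + b * (c1 * (1 - b) * x powr (1 - b) / x)"
    using x by (simp add: field_simps power2_eq_square)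
qed

lemma sol_log:
  fixes c0 c1 :: real
  shows "solves_pde 1 {(t, x). x > 0} (\<lambda>t x. c0 + c1 * ln (sqrt x))"
  unfolding solves_pde_def
proof (rule exI[of _ "\<lambda>t x. 0"], rule exI[of _ "\<lambda>t x. c1 / (2*x)"],
       rule exI[of _ "\<lambda>t x. - c1 / (2*x^2)"], intro allI impI conjI)
  fix t x :: real assume "(t,x) \<in> {(t, x). x > 0}"
  then have x: "x > 0" by auto
  show "((\<lambda>p. c0 + c1 * ln (sqrt (snd p))) has_derivative (\<lambda>h. 0 * fst h + c1 / (2*x) * snd h)) (at (t, x))"
    apply (rule has_derivative_eq_rhs)
     apply (rule derivative_eq_intros refl | (insert x, simp; fail))+
    using x apply (simp add: fun_eq_iff field_simps)
    done
  show "((\<lambda>y. c1 / (2*y)) has_real_derivative - c1 / (2*x^2)) (at x)"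
    apply (rule DERIV_cong)
     apply (rule derivative_eq_intros refl | (insert x, simp; fail))+
    using x apply (simp add: field_simps power2_eq_square)
    done
  show "0 = x * (- c1 / (2 * x\<^sup>2)) + 1 * (c1 / (2 * x))"
    using x by (simp add: field_simps power2_eq_square)
qed

theorem mainTheorem14:
  fixes b \<epsilon> :: real
  assumes "b > 0"
  shows "(\<forall>(u :: real \<Rightarrow> real \<Rightarrow> real) (D :: (real \<times> real) set).
            open D \<and> solves_pde b D u \<longrightarrow>
            solves_pde b {(t, x). 1 + \<epsilon> * t > 0 \<and> (t / (1 + \<epsilon> * t), x / (1 + \<epsilon> * t)\<^sup>2) \<in> D}
              (\<lambda>t x. (1 + \<epsilon> * t) powr (- b) * exp (- \<epsilon> * x / (1 + \<epsilon> * t))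
                       * u (t / (1 + \<epsilon> * t)) (x / (1 + \<epsilon> * t)\<^sup>2)))
       \<and> (\<forall>c0 c1 :: real. b \<noteq> 1 \<longrightarrow>
            solves_pde b {(t, x). x > 0 \<and> 1 + \<epsilon> * t > 0}
              (\<lambda>t x. (1 + \<epsilon> * t) powr (- b) * exp (- \<epsilon> * x / (1 + \<epsilon> * t))
                       * (c0 + c1 * (1 + \<epsilon> * t) powr (2 * (b - 1)) * x powr (1 - b))))
       \<and> (\<forall>c0 c1 :: real. b = 1 \<longrightarrow>
            solves_pde b {(t, x). x > 0 \<and> 1 + \<epsilon> * t > 0}
              (\<lambda>t x. (1 + \<epsilon> * t) powr (- 1) * exp (- \<epsilon> * x / (1 + \<epsilon> * t))
                       * (c0 + c1 * ln (sqrt x / (1 + \<epsilon> * t)))))"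
proof (intro conjI allI impI)
  fix u :: "real \<Rightarrow> real \<Rightarrow> real" and D :: "(real \<times> real) set"
  assume "open D \<and> solves_pde b D u"
  then show "solves_pde b {(t, x). 1 + \<epsilon> * t > 0 \<and> (t / (1 + \<epsilon> * t), x / (1 + \<epsilon> * t)\<^sup>2) \<in> D}
              (\<lambda>t x. (1 + \<epsilon> * t) powr (- b) * exp (- \<epsilon> * x / (1 + \<epsilon> * t))
                       * u (t / (1 + \<epsilon> * t)) (x / (1 + \<epsilon> * t)\<^sup>2))"
    using part1 by blast
next
  fix c0 c1 :: real assume "b \<noteq> 1"
  have eqD: "{(t, x). 1 + \<epsilon> * t > 0 \<and> (t / (1 + \<epsilon> * t), x / (1 + \<epsilon> * t)\<^sup>2) \<in> {(t::real, x::real). x > 0}}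
      = {(t, x). x > 0 \<and> 1 + \<epsilon> * t > 0}"
    by (auto simp: zero_less_divide_iff)
  have P: "solves_pde b {(t, x). x > 0 \<and> 1 + \<epsilon> * t > 0}
     (\<lambda>t x. (1 + \<epsilon> * t) powr (- b) * exp (- \<epsilon> * x / (1 + \<epsilon> * t))
                       * (c0 + c1 * (x / (1 + \<epsilon> * t)\<^sup>2) powr (1 - b)))"
    using part1[OF sol_pow[of b c0 c1], where \<epsilon>=\<epsilon>] unfolding eqD by simp
  show "solves_pde b {(t, x). x > 0 \<and> 1 + \<epsilon> * t > 0}
              (\<lambda>t x. (1 + \<epsilon> * t) powr (- b) * exp (- \<epsilon> * x / (1 + \<epsilon> * t))
                       * (c0 + c1 * (1 + \<epsilon> * t) powr (2 * (b - 1)) * x powr (1 - b)))"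
  proof (rule transfer[OF P openD1])
    fix t x :: real assume "(t, x) \<in> {(t, x). x > 0 \<and> 1 + \<epsilon> * t > 0}"
    then have x: "x > 0" and s: "1 + \<epsilon> * t > 0" by auto
    have s2: "(1 + \<epsilon> * t)^2 = (1 + \<epsilon> * t) powr 2"
      using s by simp
    have s2a: "((1 + \<epsilon> * t)^2) powr (1 - b) = (1 + \<epsilon> * t) powr (2 * (1 - b))"
      by (subst s2) (simp only: powr_powr)
    have s3: "(1 + \<epsilon> * t) powr (2 * (b - 1)) = inverse ((1 + \<epsilon> * t) powr (2 * (1 - b)))"
      by (simp only: powr_minus[symmetric]) (simp add: algebra_simps)
    have "(x / (1 + \<epsilon> * t)\<^sup>2) powr (1 - b) = (1 + \<epsilon> * t) powr (2 * (b - 1)) * x powr (1 - b)"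
      unfolding powr_divide s2a s3 by (simp add: divide_inverse)
    then show "(1 + \<epsilon> * t) powr (- b) * exp (- \<epsilon> * x / (1 + \<epsilon> * t))
                       * (c0 + c1 * (x / (1 + \<epsilon> * t)\<^sup>2) powr (1 - b)) =
         (1 + \<epsilon> * t) powr (- b) * exp (- \<epsilon> * x / (1 + \<epsilon> * t))
                       * (c0 + c1 * (1 + \<epsilon> * t) powr (2 * (b - 1)) * x powr (1 - b))"
      by simp
  qed
next
  fix c0 c1 :: real assume b1: "b = 1"
  have eqD: "{(t, x). 1 + \<epsilon> * t > 0 \<and> (t / (1 + \<epsilon> * t), x / (1 + \<epsilon> * t)\<^sup>2) \<in> {(t::real, x::real). x > 0}}
      = {(t, x). x > 0 \<and> 1 + \<epsilon> * t > 0}"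
    by (auto simp: zero_less_divide_iff)
  have P: "solves_pde 1 {(t, x). x > 0 \<and> 1 + \<epsilon> * t > 0}
     (\<lambda>t x. (1 + \<epsilon> * t) powr (- 1) * exp (- \<epsilon> * x / (1 + \<epsilon> * t))
                       * (c0 + c1 * ln (sqrt (x / (1 + \<epsilon> * t)\<^sup>2))))"
    using part1[OF sol_log[of c0 c1], where \<epsilon>=\<epsilon>] unfolding eqD by simp
  show "solves_pde b {(t, x). x > 0 \<and> 1 + \<epsilon> * t > 0}
              (\<lambda>t x. (1 + \<epsilon> * t) powr (- 1) * exp (- \<epsilon> * x / (1 + \<epsilon> * t))
                       * (c0 + c1 * ln (sqrt x / (1 + \<epsilon> * t))))"
    unfolding b1
  proof (rule transfer[OF P openD1])
    fix t x :: real assume "(t, x) \<in> {(t, x). x > 0 \<and> 1 + \<epsilon> * t > 0}"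
    then have x: "x > 0" and s: "1 + \<epsilon> * t > 0" by auto
    have "sqrt (x / (1 + \<epsilon> * t)\<^sup>2) = sqrt x / (1 + \<epsilon> * t)"
      using s by (simp add: real_sqrt_divide)
    then show "(1 + \<epsilon> * t) powr (- 1) * exp (- \<epsilon> * x / (1 + \<epsilon> * t))
                       * (c0 + c1 * ln (sqrt (x / (1 + \<epsilon> * t)\<^sup>2))) =
         (1 + \<epsilon> * t) powr (- 1) * exp (- \<epsilon> * x / (1 + \<epsilon> * t))
                       * (c0 + c1 * ln (sqrt x / (1 + \<epsilon> * t)))"
      by simp
  qed
qed

end
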